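(* Let $n\ge 1$ and $a\ge 2$ be integers and $r>0$. For $j\in\mathbb Z$ let $P_j=\bigl(r\cos(2\pi j/n),\, r\sin(2\pi j/n)\bigr)$. Let $E$ be the set of unordered pairs $\{s,t\}$ of distinct elements of $\mathbb Z_n$ such that $t\equiv as \pmod n$ or $s\equiv at \pmod n$ (the set of distinct non-degenerate line segments of the residue design, each counted once). Then \[\sum_{\{s,t\}\in E} |P_sP_t| \;=\; 2rg_1\cot\left(\frac{\pi g_1}{2n}\right)-rg_2\cot\left(\frac{\pi g_2}{2m}\right),\] where $m$ is the largest positive divisor of $n$ for which $a^2\equiv 1 \pmod m$, $g_1=\gcd(a-1,n)$ and $g_2=\gcd(a-1,m)$. *)

theory Defs
  imports "HOL-Analysis.Analysis" "HOL-Number_Theory.Cong"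
begin

definition circ_pt :: "real \<Rightarrow> nat \<Rightarrow> int \<Rightarrow> real \<times> real" where
  "circ_pt r n j = (r * cos (2 * pi * of_int j / of_nat n), r * sin (2 * pi * of_int j / of_nat n))"

definition residue_edges :: "nat \<Rightarrow> nat \<Rightarrow> nat set set" where
  "residue_edges n a = {{s, t} | s t. s < n \<and> t < n \<and> s \<noteq> t \<and>
      ([t = a * s] (mod n) \<or> [s = a * t] (mod n))}"

definition seg_len :: "real \<Rightarrow> nat \<Rightarrow> nat set \<Rightarrow> real" where
  "seg_len r n e = dist (circ_pt r n (int (Min e))) (circ_pt r n (int (Max e)))"

definition mdiv :: "nat \<Rightarrow> nat \<Rightarrow> nat" where
  "mdiv n a = (GREATEST m. m dvd n \<and> m > 0 \<and> [a^2 = 1] (mod m))"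

end

theory Submission
  imports Defs
begin

lemma abs_sin_shift: "\<bar>sin (x + pi * of_int k)\<bar> = \<bar>sin x\<bar>"
  by (simp add: sin_add)

lemma sin_sum_tele:
  fixes x :: real
  shows "2 * sin (x/2) * (\<Sum>k<N. sin (real k * x)) = cos (x/2) - cos ((real N - 1/2) * x)"
proof (induction N)
  case 0 then show ?case by simp
next
  case (Suc N)
  have "2 * sin (x/2) * sin (real N * x) = cos ((real N - 1/2) * x) - cos ((real N + 1/2) * x)"
  proof -
    have 1: "sin (x/2) * sin (real N * x) = (cos (x/2 - real N * x) - cos (x/2 + real N * x)) / 2" by (rule sin_times_sin)
    have "x/2 - real N * x = -((real N - 1/2) * x)" by (simp add: algebra_simps)
    hence 2: "cos (x/2 - real N * x) = cos ((real N - 1/2) * x)" by (metis cos_minus)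
    have 3: "x/2 + real N * x = (real N + 1/2) * x" by (simp add: algebra_simps)
    show ?thesis using 1 2 3 by simp
  qed
  have "(\<Sum>k<Suc N. sin (real k * x)) = (\<Sum>k<N. sin (real k * x)) + sin (real N * x)" by simp
  hence "2 * sin (x/2) * (\<Sum>k<Suc N. sin (real k * x)) = 2 * sin (x/2) * (\<Sum>k<N. sin (real k * x)) + 2 * sin (x/2) * sin (real N * x)"
    by (simp add: algebra_simps)
  also have "\<dots> = cos (x/2) - cos ((real (Suc N) - 1/2) * x)" using Suc \<open>2 * sin (x/2) * sin (real N * x) = _\<close>
    by (simp add: algebra_simps)
  finally show ?case .
qed

lemma sin_sum_cot:
  assumes "M \<ge> 1"
  shows "(\<Sum>k<M. sin (pi * real k / real M)) = cot (pi / (2 * real M))"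
proof -
  define x where "x = pi / real M"
  have M: "real M > 0" using assms by simp
  have s: "sin (x/2) > 0" unfolding x_def
    apply (rule sin_gt_zero) using M assms by (auto simp: field_simps)
  have e: "(real M - 1/2) * x = pi - x/2" unfolding x_def using M by (simp add: field_simps)
  have "2 * sin (x/2) * (\<Sum>k<M. sin (real k * x)) = 2 * cos (x/2)"
    using sin_sum_tele[of x M] e by simp
  hence "(\<Sum>k<M. sin (real k * x)) = cos (x/2) / sin (x/2)" using s by (simp add: field_simps)
  moreover have "(\<Sum>k<M. sin (pi * real k / real M)) = (\<Sum>k<M. sin (real k * x))"
    unfolding x_def by (simp add: field_simps)
  moreover have "x/2 = pi / (2 * real M)" unfolding x_def by simp
  ultimately show ?thesis by (simp add: cot_def)
qed

lemma sq_expand: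
  fixes r x1 x2 y1 y2 :: real
  shows "(r * x1 - r * x2)^2 + (r * y1 - r * y2)^2 = r^2 * ((y1^2 + x1^2) + (y2^2 + x2^2) - 2 * (x1 * x2 + y1 * y2))"
  by (simp add: power2_eq_square algebra_simps)

lemma dist_circ:
  assumes "r > 0"
  shows "dist (circ_pt r n s) (circ_pt r n t) = 2 * r * \<bar>sin (pi * of_int (t - s) / real n)\<bar>"
proof -
  define A where "A = 2 * pi * of_int s / real n"
  define B where "B = 2 * pi * of_int t / real n"
  define h where "h = pi * of_int (t - s) / real n"
  have AB: "A - B = 2 * (-h)" unfolding A_def B_def h_def by (cases "n = 0") (simp_all add: field_simps)
  have "(r * cos A - r * cos B)^2 + (r * sin A - r * sin B)^2 = r^2 * (2 - 2 * cos (A - B))"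
  proof -
    have "(r * cos A - r * cos B)^2 + (r * sin A - r * sin B)^2 =
      r^2 * ((sin A ^ 2 + cos A ^ 2) + (sin B ^ 2 + cos B ^ 2) - 2 * (cos A * cos B + sin A * sin B))"
      using sq_expand[of r "cos A" "cos B" "sin A" "sin B"] .
    thus ?thesis by (simp only: sin_cos_squared_add cos_diff) simp
  qed
  also have "\<dots> = (2 * r * sin h)^2" unfolding AB cos_double_sin by (simp add: power2_eq_square algebra_simps)
  finally have "dist (circ_pt r n s) (circ_pt r n t) = sqrt ((2 * r * sin h)^2)"
    unfolding circ_pt_def dist_Pair_Pair dist_real_def A_def B_def by simp
  also have "\<dots> = 2 * r * \<bar>sin h\<bar>" using assms by (simp add: abs_mult)
  finally show ?thesis unfolding h_def .
qed


lemma sum_mod_rep: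
  fixes F :: "nat \<Rightarrow> real"
  shows "(\<Sum>u<g*M. F (u mod M)) = real g * (\<Sum>u<M. F u)"
proof (induction g)
  case 0 then show ?case by simp
next
  case (Suc g)
  have "{..<Suc g * M} = {..<g*M} \<union> {g*M..<M + g*M}" by (auto simp: algebra_simps)
  hence "(\<Sum>u<Suc g*M. F (u mod M)) = (\<Sum>u<g*M. F (u mod M)) + (\<Sum>u\<in>{0+g*M..<M + g*M}. F (u mod M))"
    by (simp add: sum.union_disjoint ivl_disj_int)
  also have "(\<Sum>u\<in>{0+g*M..<M + g*M}. F (u mod M)) = (\<Sum>u\<in>{0..<M}. F ((u + g*M) mod M))"
    by (rule sum.shift_bounds_nat_ivl)
  also have "\<dots> = (\<Sum>u<M. F u)" by (intro sum.cong) auto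
  finally show ?case using Suc by (simp add: algebra_simps)
qed

lemma abs_sin_mod:
  fixes x M :: nat
  assumes "M > 0"
  shows "\<bar>sin (pi * real x / real M)\<bar> = \<bar>sin (pi * real (x mod M) / real M)\<bar>"
proof -
  have "real x = real (x mod M) + real M * real (x div M)"
    by (metis of_nat_add of_nat_mult mod_mult_div_eq add.commute)
  hence "pi * real x / real M = pi * real (x mod M) / real M + pi * of_int (int (x div M))"
    using assms by (simp add: field_simps)
  thus ?thesis by (simp only: abs_sin_shift)
qed

lemma sum_abs_sin:
  fixes c N :: nat
  assumes "N \<ge> 1" "c > 0"
  shows "(\<Sum>u<N. \<bar>sin (pi * real c * real u / real N)\<bar>) =
     real (gcd c N) * cot (pi * real (gcd c N) / (2 * real N))"
proof -
  define g where "g = gcd c N"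
  define M where "M = N div g"
  define b where "b = c div g"
  have gpos: "g > 0" using assms unfolding g_def by simp
  have NgM: "N = g * M" unfolding M_def g_def by simp
  have cgb: "c = g * b" unfolding b_def g_def by simp
  have Mpos: "M > 0" using NgM assms by (cases M) auto
  have cop: "coprime b M"
    using gpos unfolding b_def M_def g_def
    by (metis assms(2) div_gcd_coprime gcd_eq_0_iff less_not_refl2)
  define F where "F = (\<lambda>k. \<bar>sin (pi * real k / real M)\<bar>)"
  have 1: "\<bar>sin (pi * real c * real u / real N)\<bar> = F ((b * (u mod M)) mod M)" for u
  proof -
    have "pi * real c * real u / real N = pi * real (b * u) / real M"
      using gpos by (simp add: NgM cgb field_simps)
    hence "\<bar>sin (pi * real c * real u / real N)\<bar> = F ((b * u) mod M)"
      unfolding F_def using abs_sin_mod[OF Mpos] by simp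
    also have "(b * u) mod M = (b * (u mod M)) mod M" by (simp add: mod_mult_right_eq)
    finally show ?thesis .
  qed
  have "(\<Sum>u<N. \<bar>sin (pi * real c * real u / real N)\<bar>) = (\<Sum>u<g*M. (\<lambda>v. F ((b * v) mod M)) (u mod M))"
    using 1 NgM by simp
  also have "\<dots> = real g * (\<Sum>u<M. F ((b * u) mod M))" by (rule sum_mod_rep)
  also have "(\<Sum>u<M. F ((b * u) mod M)) = (\<Sum>k<M. F k)"
  proof -
    have inj: "inj_on (\<lambda>u. (b * u) mod M) {..<M}"
    proof (rule inj_onI)
      fix u v assume "u \<in> {..<M}" "v \<in> {..<M}" "(b * u) mod M = (b * v) mod M"
      hence "[b * u = b * v] (mod M)" by (simp add: cong_def)
      hence "[u = v] (mod M)" using cong_mult_lcancel_nat[OF cop] by simp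
      thus "u = v" using \<open>u \<in> _\<close> \<open>v \<in> _\<close> by (simp add: cong_def)
    qed
    have img: "(\<lambda>u. (b * u) mod M) ` {..<M} = {..<M}"
      by (rule endo_inj_surj) (use inj Mpos in auto)
    show ?thesis using sum.reindex[OF inj, of F] img by simp
  qed
  also have "(\<Sum>k<M. F k) = (\<Sum>k<M. sin (pi * real k / real M))"
  proof (intro sum.cong refl)
    fix k assume "k \<in> {..<M}"
    hence "sin (pi * real k / real M) \<ge> 0" using Mpos
      by (intro sin_ge_zero) (auto simp: field_simps)
    thus "F k = sin (pi * real k / real M)" unfolding F_def by simp
  qed
  also have "\<dots> = cot (pi / (2 * real M))" using sin_sum_cot Mpos by simp
  also have "pi / (2 * real M) = pi * real g / (2 * real N)" using gpos by (simp add: NgM)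
  finally show ?thesis unfolding g_def .
qed


lemma mdiv_eq:
  assumes "n \<ge> 1" "a \<ge> 2"
  shows "mdiv n a = gcd (a^2 - 1) n"
proof -
  have a2: "a^2 \<ge> 1" using assms by (simp add: one_le_power)
  have P: "[a^2 = 1] (mod y) \<longleftrightarrow> y dvd (a^2 - 1)" for y
    using cong_altdef_nat[OF a2] by simp
  show ?thesis unfolding mdiv_def
  proof (rule Greatest_equality)
    show "gcd (a\<^sup>2 - 1) n dvd n \<and> 0 < gcd (a\<^sup>2 - 1) n \<and> [a\<^sup>2 = 1] (mod gcd (a\<^sup>2 - 1) n)"
      using assms P by auto
  next
    fix y assume "y dvd n \<and> 0 < y \<and> [a\<^sup>2 = 1] (mod y)"
    hence "y dvd gcd (a^2 - 1) n" using P by auto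
    thus "y \<le> gcd (a\<^sup>2 - 1) n" using assms by (intro dvd_imp_le) auto
  qed
qed

lemma fixed_char:
  fixes n a s :: nat
  assumes "n \<ge> 1" "a \<ge> 2" "s < n"
  defines "m \<equiv> gcd (a^2 - 1) n"
  shows "(a * (a * s mod n) mod n = s) \<longleftrightarrow> (n div m) dvd s"
proof -
  define k where "k = a^2 - 1"
  define d where "d = n div m"
  define c where "c = k div m"
  have mpos: "m > 0" using assms unfolding m_def by simp
  have ndm: "n = m * d" unfolding d_def m_def by simp
  have kcm: "k = m * c" unfolding c_def m_def k_def by simp
  have cop: "coprime d c"
    unfolding d_def c_def m_def k_def
    by (metis assms(1) coprime_commute div_gcd_coprime gcd_eq_0_iff not_one_le_zero)
  have "a * (a * s mod n) mod n = (a^2 * s) mod n" by (simp add: mod_mult_right_eq power2_eq_square mult.assoc)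
  hence "(a * (a * s mod n) mod n = s) \<longleftrightarrow> [a^2 * s = s] (mod n)"
    using assms(3) by (simp add: cong_def)
  also have "\<dots> \<longleftrightarrow> n dvd (a^2 * s - s)"
    by (rule cong_altdef_nat) (use assms in \<open>simp add: one_le_power\<close>)
  also have "a^2 * s - s = k * s" unfolding k_def by (simp add: diff_mult_distrib)
  also have "n dvd k * s \<longleftrightarrow> d dvd c * s" using mpos by (simp add: ndm kcm mult.assoc)
  also have "\<dots> \<longleftrightarrow> d dvd s" using cop by (simp add: coprime_dvd_mult_right_iff)
  finally show ?thesis unfolding d_def .
qed

lemma seg_len_pair:
  "seg_len r n {s, t} = dist (circ_pt r n (int s)) (circ_pt r n (int t))"
  unfolding seg_len_def by (cases "s \<le> t") (auto simp: max_def min_def dist_commute)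

lemma G_eq:
  fixes n a s :: nat
  assumes "n \<ge> 1" "a \<ge> 1" "r > 0"
  shows "dist (circ_pt r n (int s)) (circ_pt r n (int (a * s mod n)))
     = 2 * r * \<bar>sin (pi * real (a - 1) * real s / real n)\<bar>"
proof -
  have e: "int (a * s mod n) - int s = int ((a - 1) * s) + int n * (- int (a * s div n))"
  proof -
    have "int (a * s mod n) = int (a * s) - int n * int (a * s div n)"
      by (metis add_diff_cancel_right' mod_mult_div_eq of_nat_add of_nat_mult mult.commute)
    moreover have "int (a * s) - int s = int ((a - 1) * s)" using assms
      by (simp add: diff_mult_distrib of_nat_diff)
    ultimately show ?thesis by simp
  qed
  have "pi * of_int (int (a * s mod n) - int s) / real n
      = pi * real (a - 1) * real s / real n + pi * of_int (- int (a * s div n))"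
    unfolding e using assms by (simp add: field_simps)
  thus ?thesis using dist_circ[OF assms(3)] by (simp only: abs_sin_shift)
qed


theorem theorem2:
  fixes n a :: nat and r :: real
  assumes "n \<ge> 1" and "a \<ge> 2" and "r > 0"
  shows "(\<Sum>e\<in>residue_edges n a. seg_len r n e) =
    2 * r * real (gcd (a - 1) n) * cot (pi * real (gcd (a - 1) n) / (2 * real n))
    - r * real (gcd (a - 1) (mdiv n a)) * cot (pi * real (gcd (a - 1) (mdiv n a)) / (2 * real (mdiv n a)))"
proof -
  define P where "P = (\<lambda>s::nat. circ_pt r n (int s))"
  define G where "G = (\<lambda>s. dist (P s) (P (a * s mod n)))"
  define S where "S = {s. s < n \<and> a * s mod n \<noteq> s}"
  define \<phi> where "\<phi> = (\<lambda>s. {s, a * s mod n})"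
  define fx where "fx = (\<lambda>s. a * (a * s mod n) mod n = s)"
  define w where "w = (\<lambda>s. if fx s then 1/2 else (1::real))"
  define m where "m = mdiv n a"
  have npos: "n > 0" using assms by simp
  have finS: "finite S" unfolding S_def by simp
  have E: "residue_edges n a = \<phi> ` S"
  proof
    show "residue_edges n a \<subseteq> \<phi> ` S"
    proof
      fix e assume "e \<in> residue_edges n a"
      then obtain s t where st: "e = {s, t}" "s < n" "t < n" "s \<noteq> t"
        "[t = a * s] (mod n) \<or> [s = a * t] (mod n)"
        unfolding residue_edges_def by blast
      show "e \<in> \<phi> ` S"
      proof (cases "[t = a * s] (mod n)")
        case True
        hence "t = a * s mod n" using st by (simp add: cong_def)
        thus ?thesis using st unfolding S_def \<phi>_def by auto
      next
        case False
        hence "s = a * t mod n" using st by (simp add: cong_def)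
        hence "e = \<phi> t" "t \<in> S" using st unfolding S_def \<phi>_def by auto
        thus ?thesis by blast
      qed
    qed
  next
    show "\<phi> ` S \<subseteq> residue_edges n a"
    proof
      fix e assume "e \<in> \<phi> ` S"
      then obtain s where s: "s \<in> S" "e = {s, a * s mod n}" unfolding \<phi>_def by auto
      have h: "s < n" "a * s mod n < n" "s \<noteq> a * s mod n" "[a * s mod n = a * s] (mod n)"
        using s npos unfolding S_def by (auto simp: cong_def)
      show "e \<in> residue_edges n a" unfolding residue_edges_def s(2)
        using h by blast
    qed
  qed
  have seg: "seg_len r n (\<phi> s) = G s" for s
    unfolding \<phi>_def G_def P_def by (rule seg_len_pair)
  have fiber: "(\<Sum>x\<in>{x \<in> S. \<phi> x = e}. w x * G x) = seg_len r n e" if "e \<in> \<phi> ` S" for e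
  proof -
    obtain s0 where s0: "s0 \<in> S" "e = \<phi> s0" using \<open>e \<in> \<phi> ` S\<close> by blast
    define t where "t = a * s0 mod n"
    have s0t: "s0 \<noteq> t" "s0 < n" "t < n" using s0 npos unfolding t_def S_def by auto
    have Gt: "G t = G s0" if "a * t mod n = s0"
      unfolding G_def using that by (simp add: t_def dist_commute)
    show ?thesis
    proof (cases "a * t mod n = s0")
      case True
      have F: "{x \<in> S. \<phi> x = e} = {s0, t}"
        using s0 s0t True unfolding S_def \<phi>_def t_def by (auto simp: doubleton_eq_iff)
      have "fx s0" "fx t" using True s0t unfolding fx_def t_def by auto
      hence "(\<Sum>x\<in>{x \<in> S. \<phi> x = e}. w x * G x) = G s0"
        unfolding F using s0t Gt[OF True] by (simp add: w_def)
      thus ?thesis using seg s0 by simp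
    next
      case False
      have F: "{x \<in> S. \<phi> x = e} = {s0}"
        using s0 s0t False unfolding S_def \<phi>_def t_def by (auto simp: doubleton_eq_iff)
      have "\<not> fx s0" using False unfolding fx_def t_def by auto
      thus ?thesis unfolding F using seg s0 by (simp add: w_def)
    qed
  qed
  have A: "(\<Sum>e\<in>residue_edges n a. seg_len r n e) = (\<Sum>s\<in>S. w s * G s)"
  proof -
    have "(\<Sum>e\<in>residue_edges n a. seg_len r n e) = (\<Sum>e\<in>\<phi> ` S. (\<Sum>x\<in>{x \<in> S. \<phi> x = e}. w x * G x))"
      unfolding E using fiber by simp
    also have "\<dots> = (\<Sum>s\<in>S. w s * G s)" by (rule sum.group) (use finS in auto)
    finally show ?thesis .
  qed
  have B: "(\<Sum>s\<in>S. w s * G s) = (\<Sum>s<n. G s) - 1/2 * (\<Sum>s\<in>{s. s < n \<and> fx s}. G s)"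
  proof -
    have "(\<Sum>s\<in>S. w s * G s) = (\<Sum>s<n. w s * G s)"
      by (rule sum.mono_neutral_left) (auto simp: S_def G_def)
    also have "\<dots> = (\<Sum>s<n. G s - (if fx s then G s / 2 else 0))"
      by (intro sum.cong) (auto simp: w_def)
    also have "\<dots> = (\<Sum>s<n. G s) - (\<Sum>s<n. (if fx s then G s / 2 else 0))"
      by (simp add: sum_subtractf)
    also have "(\<Sum>s<n. (if fx s then G s / 2 else 0)) = (\<Sum>s\<in>{s. s < n \<and> fx s}. G s / 2)"
      by (simp add: sum.If_cases Int_def lessThan_def conj_commute)
    also have "\<dots> = 1/2 * (\<Sum>s\<in>{s. s < n \<and> fx s}. G s)" by (simp add: sum_divide_distrib)
    finally show ?thesis .
  qed
  have Gf: "G s = 2 * r * \<bar>sin (pi * real (a - 1) * real s / real n)\<bar>" for s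
    unfolding G_def P_def using G_eq[of n a r s] assms by simp
  have C: "(\<Sum>s<n. G s) = 2 * r * (real (gcd (a - 1) n) * cot (pi * real (gcd (a - 1) n) / (2 * real n)))"
    unfolding Gf using sum_abs_sin[of n "a - 1"] assms by (simp add: sum_distrib_left[symmetric])
  have meq: "m = gcd (a^2 - 1) n" unfolding m_def using mdiv_eq assms by simp
  define d where "d = n div m"
  have mpos: "m > 0" using meq npos by simp
  have ndm: "n = m * d" unfolding d_def meq by simp
  have dpos: "d > 0" using ndm npos by (cases d) auto
  have T: "{s. s < n \<and> fx s} = (\<lambda>u. d * u) ` {..<m}"
  proof -
    have "fx s \<longleftrightarrow> d dvd s" if "s < n" for s
      unfolding fx_def d_def meq using fixed_char[OF assms(1,2) that] by simp
    hence "{s. s < n \<and> fx s} = {s. s < n \<and> d dvd s}" by auto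
    also have "\<dots> = (\<lambda>u. d * u) ` {..<m}"
      using dpos by (auto simp: ndm elim!: dvdE)
    finally show ?thesis .
  qed
  have D: "(\<Sum>s\<in>{s. s < n \<and> fx s}. G s) = 2 * r * (real (gcd (a - 1) m) * cot (pi * real (gcd (a - 1) m) / (2 * real m)))"
  proof -
    have inj: "inj_on (\<lambda>u. d * u) {..<m}" using dpos by (auto simp: inj_on_def)
    have "(\<Sum>s\<in>{s. s < n \<and> fx s}. G s) = (\<Sum>u<m. G (d * u))"
      unfolding T using sum.reindex[OF inj, of G] by simp
    also have "\<dots> = (\<Sum>u<m. 2 * r * \<bar>sin (pi * real (a - 1) * real u / real m)\<bar>)"
    proof (intro sum.cong refl)
      fix u
      have "pi * real (a - 1) * real (d * u) / real n = pi * real (a - 1) * real u / real m"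
        using dpos mpos by (simp add: ndm field_simps)
      thus "G (d * u) = 2 * r * \<bar>sin (pi * real (a - 1) * real u / real m)\<bar>" unfolding Gf by simp
    qed
    also have "\<dots> = 2 * r * (real (gcd (a - 1) m) * cot (pi * real (gcd (a - 1) m) / (2 * real m)))"
      using sum_abs_sin[of m "a - 1"] assms mpos by (simp add: sum_distrib_left[symmetric])
    finally show ?thesis .
  qed
  show ?thesis unfolding A B C D m_def[symmetric] by (simp add: algebra_simps)
qed

end
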